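(* For every integer $K\ge2$: $\eta(r,K,1)<1-\frac1K$ for all $r>1$, and $\lim_{r\to\infty}\eta(r,K,1)=1-\frac1K$. For every $r>1$: $\eta(r,K,1)\le\frac{\ln r}{1+\ln r}$ for all integers $K\ge 2$, and $\lim_{K\to\infty}\eta(r,K,1)=\frac{\ln r}{1+\ln r}$.
   Context: Single item auction with one buyer whose value takes values $0<x^1<\dots<x^K$ with probabilities $p^i>0$, $\sum_ip^i=1$. Let $t(x,p)=\max\{i: i\in\arg\max_{1\le k\le K}x^k\sum_{j=k}^Kp^j\}$. The efficiency loss ratio of the revenue-optimal auction is $\mathrm{ELR}_1(x,p)=\sum_{i=1}^{t(x,p)-1}p^ix^i/\sum_{i=1}^Kp^ix^i$. $\eta(r,K,1)$ is the supremum of $\mathrm{ELR}_1(x,p)$ over all such $p$ and all $x$ with $0<x^1<\dots<x^K\le rx^1$. *)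

theory Defs
  imports "HOL-Analysis.Analysis"
begin

text \<open>Values x 1 < ... < x K and probabilities p 1, ..., p K are functions on nat,
  only the indices 1..K are meaningful.\<close>

definition rev_at :: "nat \<Rightarrow> (nat \<Rightarrow> real) \<Rightarrow> (nat \<Rightarrow> real) \<Rightarrow> nat \<Rightarrow> real" where
  "rev_at K x p k = x k * (\<Sum>j=k..K. p j)"

definition t_idx :: "nat \<Rightarrow> (nat \<Rightarrow> real) \<Rightarrow> (nat \<Rightarrow> real) \<Rightarrow> nat" where
  "t_idx K x p = Max {i \<in> {1..K}. \<forall>k\<in>{1..K}. rev_at K x p k \<le> rev_at K x p i}"

definition ELR1 :: "nat \<Rightarrow> (nat \<Rightarrow> real) \<Rightarrow> (nat \<Rightarrow> real) \<Rightarrow> real" where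
  "ELR1 K x p = (\<Sum>i=1..t_idx K x p - 1. p i * x i) / (\<Sum>i=1..K. p i * x i)"

definition admissible :: "real \<Rightarrow> nat \<Rightarrow> (nat \<Rightarrow> real) \<Rightarrow> (nat \<Rightarrow> real) \<Rightarrow> bool" where
  "admissible r K x p \<longleftrightarrow>
     0 < x 1 \<and> (\<forall>i\<in>{1..K}. \<forall>j\<in>{1..K}. i < j \<longrightarrow> x i < x j) \<and> x K \<le> r * x 1 \<and>
     (\<forall>i\<in>{1..K}. 0 < p i) \<and> (\<Sum>i=1..K. p i) = 1"

definition eta :: "real \<Rightarrow> nat \<Rightarrow> real" where
  "eta r K = Sup {ELR1 K x p | x p. admissible r K x p}"

end

theory Submission
  imports Defs "HOL-Real_Asymp.Real_Asymp"
begin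

lemma telesc: "(\<Sum>i=1..n. (f i - f (Suc i))::real) = f 1 - f (Suc n)"
  by (induction n) auto

lemma ratio_bound:
  fixes L R W c :: real
  assumes "0 \<le> L" "0 < R" "L + R \<le> W" "L \<le> c * R" "0 \<le> c"
  shows "L / W \<le> c / (1 + c)"
proof -
  have W: "0 < W" using assms by linarith
  have "L * (1 + c) \<le> c * W"
  proof -
    have "L * (1 + c) = L + c * L" by (simp add: algebra_simps)
    also have "\<dots> \<le> c * R + c * L" using assms by linarith
    also have "\<dots> = c * (L + R)" by (simp add: algebra_simps)
    also have "\<dots> \<le> c * W" using assms by (intro mult_left_mono) auto
    finally show ?thesis .
  qed
  then show ?thesis using W assms by (simp add: divide_simps)
qed

lemma core:
  fixes r :: real and K :: nat and x p :: "nat \<Rightarrow> real"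
  assumes adm: "admissible r K x p" and K1: "1 \<le> K" and r1: "1 < r"
  shows "ELR1 K x p \<le> ln r / (1 + ln r)"
    and "ELR1 K x p \<le> ((real K - 1) * (1 - 1 / r)) / (1 + (real K - 1) * (1 - 1 / r))"
proof -
  define S where "S k = (\<Sum>j=k..K. p j)" for k
  define t where "t = t_idx K x p"
  have x0: "0 < x 1" and xinc: "\<And>i j. i\<in>{1..K} \<Longrightarrow> j \<in> {1..K} \<Longrightarrow> i<j \<Longrightarrow> x i < x j"
    and xK: "x K \<le> r * x 1" and ppos: "\<And>i. i \<in> {1..K} \<Longrightarrow> 0 < p i" and S1: "S 1 = 1"
    using adm unfolding admissible_def S_def by auto
  have xmono: "x i \<le> x j" if "1 \<le> i" "i \<le> j" "j \<le> K" for i j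
    using xinc[of i j] that by (cases "i = j") auto
  have xpos: "0 < x i" if "1 \<le> i" "i \<le> K" for i
    using xmono[of 1 i] that x0 by auto
  have Sstep: "S i = p i + S (Suc i)" if "i \<le> K" for i
    unfolding S_def using that by (simp add: sum.atLeast_Suc_atMost)
  have Spos: "0 < S i" if "1 \<le> i" "i \<le> K" for i
    unfolding S_def using that ppos by (intro sum_pos) auto
  have Smono: "S j \<le> S i" if "1 \<le> i" "i \<le> j" for i j
    unfolding S_def using that ppos by (intro sum_mono2) (auto intro: less_imp_le)
  have rev: "rev_at K x p k = x k * S k" for k by (simp add: rev_at_def S_def)
  define A where "A = {i \<in> {1..K}. \<forall>k\<in>{1..K}. rev_at K x p k \<le> rev_at K x p i}"
  have finA: "finite A" unfolding A_def by auto
  have "Max (rev_at K x p ` {1..K}) \<in> rev_at K x p ` {1..K}"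
    using K1 by (intro Max_in) auto
  then obtain i0 where i0: "i0 \<in> {1..K}" "rev_at K x p i0 = Max (rev_at K x p ` {1..K})" by auto
  have "i0 \<in> A" unfolding A_def using i0 by auto
  then have "A \<noteq> {}" by auto
  then have "t \<in> A" unfolding t_def t_idx_def A_def[symmetric] using finA by (intro Max_in)
  then have t1: "1 \<le> t" and tK: "t \<le> K" and tmax: "\<And>k. k \<in> {1..K} \<Longrightarrow> x k * S k \<le> x t * S t"
    unfolding A_def rev by auto
  define R where "R = x t * S t"
  have Rpos: "0 < R" unfolding R_def using xpos Spos t1 tK by auto
  have St: "1 / r \<le> S t"
  proof -
    have "x 1 \<le> R" using tmax[of 1] K1 S1 unfolding R_def by auto
    also have "R \<le> r * x 1 * S t" unfolding R_def using xK xmono[OF t1 tK order_refl] Spos[OF t1 tK]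
      by (intro mult_right_mono) auto
    finally have "1 \<le> r * S t" using x0 by (simp add: mult.commute mult.left_commute)
    then show ?thesis using r1 by (simp add: divide_simps mult.commute)
  qed
  define L where "L = (\<Sum>i=1..t-1. p i * x i)"
  define W where "W = (\<Sum>i=1..K. p i * x i)"
  have Lnn: "0 \<le> L" unfolding L_def using ppos xpos t1 tK
    by (intro sum_nonneg) (auto intro!: mult_nonneg_nonneg less_imp_le)
  have Wsplit: "W = L + (\<Sum>i=t..K. p i * x i)"
  proof -
    have "{1..K} = {1..t-1} \<union> {t..K}" using t1 tK by auto
    then show ?thesis unfolding W_def L_def by (simp add: sum.union_disjoint)
  qed
  have "R = (\<Sum>i=t..K. p i * x t)" unfolding R_def S_def by (simp add: sum_distrib_left mult_ac)
  also have "\<dots> \<le> (\<Sum>i=t..K. p i * x i)" using ppos t1 xmono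
    by (intro sum_mono mult_left_mono) (auto intro: less_imp_le)
  finally have LRW: "L + R \<le> W" using Wsplit by linarith
  have tm: "p i * x i \<le> R * (p i / S i)" if "i \<in> {1..t-1}" for i
  proof -
    have i: "1 \<le> i" "i \<le> K" using that t1 tK by auto
    have "x i * S i \<le> R" using tmax[of i] i unfolding R_def by auto
    then have "(p i / S i) * (x i * S i) \<le> (p i / S i) * R"
      using ppos[of i] Spos[OF i] i by (intro mult_left_mono) auto
    then show ?thesis using Spos[OF i] by (simp add: field_simps)
  qed
  have Lle: "L \<le> R * (\<Sum>i=1..t-1. p i / S i)"
    unfolding L_def sum_distrib_left using tm by (intro sum_mono) auto
  have ELR: "ELR1 K x p = L / W" unfolding ELR1_def t_def[symmetric] L_def W_def ..
  have "(\<Sum>i=1..t-1. p i / S i) \<le> (\<Sum>i=1..t-1. ln (S i) - ln (S (Suc i)))"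
  proof (intro sum_mono)
    fix i assume "i \<in> {1..t-1}"
    then have i: "1 \<le> i" "Suc i \<le> K" "i \<le> K" using t1 tK by auto
    have a: "0 < S i" "0 < S (Suc i)" using Spos i by auto
    have "ln (S (Suc i) / S i) \<le> S (Suc i) / S i - 1" using a by (intro ln_le_minus_one) auto
    moreover have "S (Suc i) / S i - 1 = - (p i / S i)" using Sstep[OF i(3)] a by (simp add: field_simps)
    ultimately show "p i / S i \<le> ln (S i) - ln (S (Suc i))" using a by (simp add: ln_div)
  qed
  also have "\<dots> = ln (S 1) - ln (S t)" using telesc[of "\<lambda>i. ln (S i)" "t-1"] t1 by simp
  also have "\<dots> \<le> ln r"
  proof -
    have "ln (1/r) \<le> ln (S t)" using St r1 Spos[OF t1 tK] by (subst ln_le_cancel_iff) auto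
    then show ?thesis using S1 r1 by (simp add: ln_div)
  qed
  finally have "L \<le> R * ln r" using Lle Rpos by (meson mult_left_mono less_imp_le order_trans)
  then show "ELR1 K x p \<le> ln r / (1 + ln r)" unfolding ELR
    using Lnn Rpos LRW r1 by (intro ratio_bound) (auto simp: mult.commute)
  have "(\<Sum>i=1..t-1. p i / S i) \<le> (\<Sum>i=1..t-1. 1 - 1 / r)"
  proof (intro sum_mono)
    fix i assume "i \<in> {1..t-1}"
    then have i: "1 \<le> i" "Suc i \<le> t" "i \<le> K" using t1 tK by auto
    have a: "0 < S i" "0 < S (Suc i)" using Spos i tK by auto
    have "S i \<le> S 1" using Smono[of 1 i] i by auto
    then have "S (Suc i) \<le> S (Suc i) / S i" using a S1 by (simp add: divide_simps)
    moreover have "S t \<le> S (Suc i)" using Smono i by auto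
    moreover have "p i / S i = 1 - S (Suc i) / S i" using Sstep[OF i(3)] a by (simp add: field_simps)
    ultimately show "p i / S i \<le> 1 - 1 / r" using St by linarith
  qed
  also have "\<dots> = (real t - 1) * (1 - 1 / r)" using t1 by (simp add: of_nat_diff)
  also have "\<dots> \<le> (real K - 1) * (1 - 1 / r)" using tK r1 by (intro mult_right_mono) auto
  finally have "L \<le> R * ((real K - 1) * (1 - 1 / r))" using Lle Rpos by (meson mult_left_mono less_imp_le order_trans)
  then show "ELR1 K x p \<le> ((real K - 1) * (1 - 1 / r)) / (1 + (real K - 1) * (1 - 1 / r))" unfolding ELR
    using Lnn Rpos LRW r1 K1 by (intro ratio_bound) (auto simp: mult.commute)
qed


lemma constr:
  fixes r :: real and K :: nat
  assumes K2: "2 \<le> K" and r1: "1 < r"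
  shows "\<exists>x p. admissible r K x p \<and>
     ELR1 K x p = ((real K - 1) * (1 - r powr (-1 / (real K - 1)))) / (1 + (real K - 1) * (1 - r powr (-1 / (real K - 1))))"
proof -
  define m where "m = real K - 1"
  have m: "m = real (K - 1)" "0 < m" using K2 unfolding m_def by (auto simp: of_nat_diff)
  define q where "q = r powr (-1 / m)"
  have q0: "0 < q" unfolding q_def using r1 by auto
  have q1: "q < 1" unfolding q_def using r1 m by (intro powr_less_one) auto
  have qK: "q ^ (K - 1) = 1 / r"
  proof -
    have "q ^ (K - 1) = q powr real (K - 1)" using q0 by (simp add: powr_realpow)
    also have "\<dots> = r powr (-1 / m * m)" unfolding q_def powr_powr m(1) ..
    also have "\<dots> = 1 / r" using m r1 by (simp add: powr_neg_one)
    finally show ?thesis .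
  qed
  define p where "p i = (if i < K then q ^ (i - 1) * (1 - q) else q ^ (K - 1))" for i
  define x where "x i = (1 / q) ^ (i - 1)" for i
  have tail: "\<And>k. 1 \<le> k \<Longrightarrow> k + n = K \<Longrightarrow> (\<Sum>j=k..K. p j) = q ^ (k - 1)" for n
  proof (induction n)
    case 0
    then show ?case by (simp add: p_def)
  next
    case (Suc n)
    have kK: "k \<le> K" using Suc by auto
    have "(\<Sum>j=k..K. p j) = p k + (\<Sum>j=Suc k..K. p j)" using kK by (simp add: sum.atLeast_Suc_atMost)
    also have "(\<Sum>j=Suc k..K. p j) = q ^ k" using Suc.IH[of "Suc k"] Suc.prems by simp
    also have "p k = q ^ (k - 1) * (1 - q)" using Suc.prems by (simp add: p_def)
    also have "q ^ k = q ^ (k - 1) * q" using Suc.prems by (cases k) auto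
    finally show ?case by (simp add: algebra_simps)
  qed
  have tail': "(\<Sum>j=k..K. p j) = q ^ (k - 1)" if "1 \<le> k" "k \<le> K" for k
    using tail[of k "K - k"] that by auto
  have revk: "rev_at K x p k = 1" if "k \<in> {1..K}" for k
  proof -
    have "rev_at K x p k = (1 / q) ^ (k - 1) * q ^ (k - 1)" unfolding rev_at_def x_def using tail' that by auto
    also have "\<dots> = 1" using q0 by (simp add: power_mult_distrib[symmetric])
    finally show ?thesis .
  qed
  have t: "t_idx K x p = K"
  proof -
    have "{i \<in> {1..K}. \<forall>k\<in>{1..K}. rev_at K x p k \<le> rev_at K x p i} = {1..K}" using revk by auto
    moreover have "Max {1..K} = K" using K2 by (intro Max_eqI) auto
    ultimately show ?thesis unfolding t_idx_def by simp
  qed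
  have adm: "admissible r K x p"
    unfolding admissible_def
  proof (intro conjI ballI impI)
    show "0 < x 1" by (simp add: x_def)
    fix i j assume "i \<in> {1..K}" "j \<in> {1..K}" "i < j"
    then show "x i < x j" unfolding x_def using q0 q1 by (intro power_strict_increasing) auto
  next
    show "x K \<le> r * x 1" unfolding x_def using qK r1 q0 by (simp add: power_one_over)
  next
    fix i assume "i \<in> {1..K}" then show "0 < p i" unfolding p_def using q0 q1 by auto
  next
    show "(\<Sum>i=1..K. p i) = 1" using tail'[of 1] K2 by simp
  qed
  have each: "p i * x i = 1 - q" if "i \<in> {1..K-1}" for i
  proof -
    have "p i * x i = (1 - q) * (q ^ (i - 1) * (1 / q) ^ (i - 1))" using that unfolding p_def x_def by auto
    also have "\<dots> = 1 - q" using q0 by (simp add: power_mult_distrib[symmetric])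
    finally show ?thesis .
  qed
  have num: "(\<Sum>i=1..K-1. p i * x i) = m * (1 - q)" using each m(1) by simp
  have lastt: "p K * x K = 1" unfolding p_def x_def using q0 by (simp add: power_mult_distrib[symmetric])
  have den: "(\<Sum>i=1..K. p i * x i) = m * (1 - q) + 1"
  proof -
    have "{1..K} = insert K {1..K-1}" using K2 by auto
    then have "(\<Sum>i=1..K. p i * x i) = (\<Sum>i=1..K-1. p i * x i) + p K * x K"
      using K2 by (simp add: add.commute)
    then show ?thesis using num lastt by simp
  qed
  have "ELR1 K x p = (m * (1 - q)) / (1 + m * (1 - q))"
    unfolding ELR1_def t num den by (simp add: add.commute)
  then show ?thesis using adm unfolding m_def q_def by blast
qed


lemma hmono:
  fixes a b :: real
  assumes "0 \<le> a" "a \<le> b"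
  shows "a / (1 + a) \<le> b / (1 + b)"
  using assms by (simp add: divide_simps algebra_simps)

lemma hstrict:
  fixes a b :: real
  assumes "0 \<le> a" "a < b"
  shows "a / (1 + a) < b / (1 + b)"
  using assms by (simp add: divide_simps algebra_simps)

lemma eta_props:
  fixes r :: real and K :: nat
  assumes K2: "2 \<le> K" and r1: "1 < r"
  shows "eta r K \<le> ln r / (1 + ln r)"
    and "eta r K \<le> ((real K - 1) * (1 - 1 / r)) / (1 + (real K - 1) * (1 - 1 / r))"
    and "((real K - 1) * (1 - r powr (-1 / (real K - 1)))) / (1 + (real K - 1) * (1 - r powr (-1 / (real K - 1)))) \<le> eta r K"
proof -
  define E where "E = {ELR1 K x p | x p. admissible r K x p}"
  have eta: "eta r K = Sup E" unfolding eta_def E_def ..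
  obtain x p where xp: "admissible r K x p"
    "ELR1 K x p = ((real K - 1) * (1 - r powr (-1 / (real K - 1)))) / (1 + (real K - 1) * (1 - r powr (-1 / (real K - 1))))"
    using constr[OF K2 r1] by blast
  have ne: "E \<noteq> {}" unfolding E_def using xp by blast
  have K1: "1 \<le> K" using K2 by auto
  show "eta r K \<le> ln r / (1 + ln r)" unfolding eta
    by (rule cSup_least[OF ne]) (auto simp: E_def intro: core(1)[OF _ K1 r1])
  show "eta r K \<le> ((real K - 1) * (1 - 1 / r)) / (1 + (real K - 1) * (1 - 1 / r))" unfolding eta
    by (rule cSup_least[OF ne]) (auto simp: E_def intro: core(2)[OF _ K1 r1])
  have bdd: "bdd_above E" unfolding bdd_above_def E_def
    by (rule exI[of _ "ln r / (1 + ln r)"]) (auto intro: core(1)[OF _ K1 r1])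
  have "ELR1 K x p \<in> E" unfolding E_def using xp by blast
  then show "((real K - 1) * (1 - r powr (-1 / (real K - 1)))) / (1 + (real K - 1) * (1 - r powr (-1 / (real K - 1)))) \<le> eta r K"
    unfolding eta using xp(2) cSup_upper[OF _ bdd] by metis
qed

lemma lower_f:
  fixes r m :: real
  assumes r1: "1 < r" and m: "0 < m"
  shows "ln r / (1 + ln r / m) \<le> m * (1 - r powr (-1 / m))"
proof -
  define y where "y = ln r / m"
  have y: "0 < y" unfolding y_def using r1 m by auto
  have "r powr (-1 / m) = exp (- y)" unfolding y_def powr_def using r1 by simp
  also have "exp (- y) = 1 / exp y" by (simp add: exp_minus field_simps)
  also have "\<dots> \<le> 1 / (1 + y)" using y exp_ge_add_one_self[of y] by (intro divide_left_mono) auto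
  finally have "1 - 1 / (1 + y) \<le> 1 - r powr (-1 / m)" by linarith
  then have "m * (1 - 1 / (1 + y)) \<le> m * (1 - r powr (-1 / m))" using m by (intro mult_left_mono) auto
  moreover have "m * (1 - 1 / (1 + y)) = ln r / (1 + ln r / m)"
  proof -
    have p: "0 < m + ln r" using m ln_gt_zero[OF r1] by auto
    have "m * (1 - 1 / (1 + y)) = m * (ln r / (m + ln r))" unfolding y_def using m p by (simp add: field_simps)
    also have "\<dots> = ln r / (1 + ln r / m)" using m p by (simp add: field_simps)
    finally show ?thesis .
  qed
  ultimately show ?thesis by simp
qed

theorem corollary2:
  shows "(\<forall>K::nat. K \<ge> 2 \<longrightarrow>
            (\<forall>r::real. r > 1 \<longrightarrow> eta r K < 1 - 1 / real K) \<and>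
            ((\<lambda>r. eta r K) \<longlongrightarrow> 1 - 1 / real K) at_top) \<and>
         (\<forall>r::real. r > 1 \<longrightarrow>
            (\<forall>K::nat. K \<ge> 2 \<longrightarrow> eta r K \<le> ln r / (1 + ln r)) \<and>
            ((\<lambda>K. eta r K) \<longlonglongrightarrow> ln r / (1 + ln r)))"
proof (intro conjI allI impI)
  fix K :: nat assume K2: "K \<ge> 2"
  define m where "m = real K - 1"
  have m1: "1 \<le> m" using K2 unfolding m_def by auto
  have target: "1 - 1 / real K = m / (1 + m)" unfolding m_def using K2 by (simp add: field_simps)
  fix r :: real assume r1: "r > 1"
  have "eta r K \<le> (m * (1 - 1 / r)) / (1 + m * (1 - 1 / r))" using eta_props(2)[OF K2 r1] unfolding m_def .
  also have "\<dots> < m / (1 + m)"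
  proof -
    have a: "0 \<le> m * (1 - 1 / r)" using m1 r1 by auto
    have b: "m * (1 - 1 / r) < m" using m1 r1 by (simp add: algebra_simps)
    show ?thesis using hstrict[OF a b] .
  qed
  finally show "eta r K < 1 - 1 / real K" unfolding target .
next
  fix K :: nat assume K2: "K \<ge> 2"
  define m where "m = real K - 1"
  have m1: "1 \<le> m" using K2 unfolding m_def by auto
  have target: "1 - 1 / real K = m / (1 + m)" unfolding m_def using K2 by (simp add: field_simps)
  have l1: "((\<lambda>r::real. r powr (-1 / m)) \<longlongrightarrow> 0) at_top"
    using m1 by (intro tendsto_neg_powr filterlim_ident) auto
  have l2: "((\<lambda>r::real. 1 / r) \<longlongrightarrow> 0) at_top" by real_asymp
  have lo: "((\<lambda>r. (m * (1 - r powr (-1 / m))) / (1 + m * (1 - r powr (-1 / m)))) \<longlongrightarrow> (m * (1 - 0)) / (1 + m * (1 - 0))) at_top"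
    using m1 by (intro tendsto_intros l1) auto
  have up: "((\<lambda>r. (m * (1 - 1 / r)) / (1 + m * (1 - 1 / r))) \<longlongrightarrow> (m * (1 - 0)) / (1 + m * (1 - 0))) at_top"
    using m1 by (intro tendsto_intros l2) auto
  have lo': "((\<lambda>r. (m * (1 - r powr (-1 / m))) / (1 + m * (1 - r powr (-1 / m)))) \<longlongrightarrow> m / (1 + m)) at_top"
    using lo by simp
  have up': "((\<lambda>r. (m * (1 - 1 / r)) / (1 + m * (1 - 1 / r))) \<longlongrightarrow> m / (1 + m)) at_top"
    using up by simp
  have ev: "eventually (\<lambda>r::real. 1 < r) at_top" by (rule eventually_gt_at_top)
  show "((\<lambda>r. eta r K) \<longlongrightarrow> 1 - 1 / real K) at_top"
    unfolding target
  proof (rule tendsto_sandwich[OF _ _ lo' up'])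
    show "\<forall>\<^sub>F r in at_top. m * (1 - r powr (-1 / m)) / (1 + m * (1 - r powr (-1 / m))) \<le> eta r K"
      using ev by eventually_elim (use eta_props(3)[OF K2] in \<open>auto simp: m_def\<close>)
    show "\<forall>\<^sub>F r in at_top. eta r K \<le> m * (1 - 1 / r) / (1 + m * (1 - 1 / r))"
      using ev by eventually_elim (use eta_props(2)[OF K2] in \<open>auto simp: m_def\<close>)
  qed
next
  fix r :: real and K :: nat assume r1: "r > 1" and K2: "K \<ge> 2"
  show "eta r K \<le> ln r / (1 + ln r)" using eta_props(1)[OF K2 r1] .
next
  fix r :: real assume r1: "r > 1"
  define c where "c = ln r"
  have c0: "0 < c" unfolding c_def using r1 by auto
  have l1: "((\<lambda>K::nat. c / (real K - 1)) \<longlonglongrightarrow> 0)" by real_asymp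
  have lo: "((\<lambda>K::nat. (c / (1 + c / (real K - 1))) / (1 + c / (1 + c / (real K - 1)))) \<longlonglongrightarrow> (c / (1 + 0)) / (1 + c / (1 + 0)))"
    using c0 by (intro tendsto_intros l1) auto
  have lo': "((\<lambda>K::nat. (c / (1 + c / (real K - 1))) / (1 + c / (1 + c / (real K - 1)))) \<longlonglongrightarrow> c / (1 + c))"
    using lo by simp
  have ev: "eventually (\<lambda>K::nat. 2 \<le> K) sequentially" by (rule eventually_ge_at_top)
  show "(\<lambda>K. eta r K) \<longlonglongrightarrow> ln r / (1 + ln r)"
    unfolding c_def[symmetric]
  proof (rule tendsto_sandwich[OF _ _ lo' tendsto_const])
    show "\<forall>\<^sub>F K in sequentially. c / (1 + c / (real K - 1)) / (1 + c / (1 + c / (real K - 1))) \<le> eta r K"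
      using ev
    proof eventually_elim
      case (elim K)
      have m: "0 < real K - 1" using elim by auto
      have a: "0 \<le> c / (1 + c / (real K - 1))" using c0 m by auto
      have "c / (1 + c / (real K - 1)) / (1 + c / (1 + c / (real K - 1)))
         \<le> ((real K - 1) * (1 - r powr (-1 / (real K - 1)))) / (1 + (real K - 1) * (1 - r powr (-1 / (real K - 1))))"
        using lower_f[OF r1 m] a unfolding c_def by (intro hmono) auto
      also have "\<dots> \<le> eta r K" using eta_props(3)[OF elim r1] .
      finally show ?case .
    qed
    show "\<forall>\<^sub>F K in sequentially. eta r K \<le> c / (1 + c)"
      using ev by eventually_elim (use eta_props(1)[OF _ r1] in \<open>auto simp: c_def\<close>)
  qed
qed

end
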